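(* Let $p(z)=z^n+a_nz^{n-1}+\cdots+a_2z+a_1$ be a complex monic polynomial with $n\geq2$ and $a_1\neq0$, with Frobenius companion matrix $C_p$. Then $$\|C_p^4\|\leq\sqrt{\frac{1}{2}\left(\delta_1+\delta+\sqrt{(\delta_1-\delta)^2+4\delta_2}\right)+1}.$$
   Context: The Frobenius companion matrix of $p$ is the $n\times n$ matrix $C_p$ whose first row is $(-a_n,-a_{n-1},\dots,-a_2,-a_1)$, whose entries $(k+1,k)$ equal $1$ for $k=1,\dots,n-1$, and whose other entries are $0$. Define numbers $b_j,c_j,d_j$ ($j=1,\dots,n$) by: the first row of $C_p^2$ is $(b_n,b_{n-1},\dots,b_1)$, the first row of $C_p^3$ is $(c_n,\dots,c_1)$, the first row of $C_p^4$ is $(d_n,\dots,d_1)$ (so $b_j=a_na_j-a_{j-1}$, $c_j=-a_nb_j+a_{n-1}a_j-a_{j-2}$ with $a_0=a_{-1}=0$). Set $\alpha=\sum_{j=1}^n|a_j|^2$, $\beta=\sum_{j=1}^n|b_j|^2$, $\gamma=-\sum_{j=1}^n b_j\overline{a_j}$, $\delta=\frac{1}{2}\left(\alpha+\beta+\sqrt{(\alpha-\beta)^2+4|\gamma|^2}\right)$; $\alpha_1=\sum_{j=1}^n|d_j|^2$, $\beta_1=\sum_{j=1}^n|c_j|^2$, $\gamma_1=\sum_{j=1}^n d_j\overline{c_j}$, $\delta_1=\frac12\left(\alpha_1+\beta_1+\sqrt{(\alpha_1-\beta_1)^2+4|\gamma_1|^2}\right)$; $\gamma_2=\sum_{j=1}^n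 d_j\overline{b_j}$, $\gamma_3=\sum_{j=1}^n d_j\overline{a_j}$, $\gamma_4=\sum_{j=1}^n c_j\overline{b_j}$, $\gamma_5=\sum_{j=1}^n c_j\overline{a_j}$, and $\delta_2=\frac12\Big(|\gamma_2|^2+|\gamma_3|^2+|\gamma_4|^2+|\gamma_5|^2+\sqrt{\big((|\gamma_2|^2+|\gamma_3|^2)-(|\gamma_4|^2+|\gamma_5|^2)\big)^2+4|\gamma_2\overline{\gamma_4}+\gamma_3\overline{\gamma_5}|^2}\Big)$. $\|\cdot\|$ is the spectral (operator) norm. *)

theory Defs
  imports Complex_Main "Jordan_Normal_Form.Matrix"
begin

text \<open>Frobenius companion matrix of p(z) = z^n + a_n z^(n-1) + ... + a_2 z + a_1
  (0-indexed rows/columns): first row (-a_n, ..., -a_1), ones on the subdiagonal.\<close>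
definition companion :: "nat \<Rightarrow> (nat \<Rightarrow> complex) \<Rightarrow> complex mat" where
  "companion n a = mat n n (\<lambda>(i,j). if i = 0 then - a (n - j)
                                    else if i = j + 1 then 1 else 0)"

definition vec_norm2 :: "complex vec \<Rightarrow> real" where
  "vec_norm2 v = sqrt (\<Sum>i<dim_vec v. (cmod (v $ i))\<^sup>2)"

definition spectral_norm :: "complex mat \<Rightarrow> real" where
  "spectral_norm A = Sup {vec_norm2 (A *\<^sub>v v) | v. v \<in> carrier_vec (dim_col A) \<and> vec_norm2 v \<le> 1}"

text \<open>First-row coefficients: the first row of C_p^k is (x_n, ..., x_1), i.e. x_j is entry (0, n-j).\<close>
definition frow :: "nat \<Rightarrow> (nat \<Rightarrow> complex) \<Rightarrow> nat \<Rightarrow> nat \<Rightarrow> complex" where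
  "frow n a k j = (companion n a ^\<^sub>m k) $$ (0, n - j)"

definition coef_b where "coef_b n a = frow n a 2"
definition coef_c where "coef_c n a = frow n a 3"
definition coef_d where "coef_d n a = frow n a 4"

definition alpha :: "nat \<Rightarrow> (nat \<Rightarrow> complex) \<Rightarrow> real" where
  "alpha n a = (\<Sum>j=1..n. (cmod (a j))\<^sup>2)"
definition beta :: "nat \<Rightarrow> (nat \<Rightarrow> complex) \<Rightarrow> real" where
  "beta n a = (\<Sum>j=1..n. (cmod (coef_b n a j))\<^sup>2)"
definition gamma :: "nat \<Rightarrow> (nat \<Rightarrow> complex) \<Rightarrow> complex" where
  "gamma n a = - (\<Sum>j=1..n. coef_b n a j * cnj (a j))"
definition delta :: "nat \<Rightarrow> (nat \<Rightarrow> complex) \<Rightarrow> real" where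
  "delta n a = (alpha n a + beta n a
      + sqrt ((alpha n a - beta n a)\<^sup>2 + 4 * (cmod (gamma n a))\<^sup>2)) / 2"

definition alpha1 :: "nat \<Rightarrow> (nat \<Rightarrow> complex) \<Rightarrow> real" where
  "alpha1 n a = (\<Sum>j=1..n. (cmod (coef_d n a j))\<^sup>2)"
definition beta1 :: "nat \<Rightarrow> (nat \<Rightarrow> complex) \<Rightarrow> real" where
  "beta1 n a = (\<Sum>j=1..n. (cmod (coef_c n a j))\<^sup>2)"
definition gamma1 :: "nat \<Rightarrow> (nat \<Rightarrow> complex) \<Rightarrow> complex" where
  "gamma1 n a = (\<Sum>j=1..n. coef_d n a j * cnj (coef_c n a j))"
definition delta1 :: "nat \<Rightarrow> (nat \<Rightarrow> complex) \<Rightarrow> real" where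
  "delta1 n a = (alpha1 n a + beta1 n a
      + sqrt ((alpha1 n a - beta1 n a)\<^sup>2 + 4 * (cmod (gamma1 n a))\<^sup>2)) / 2"

definition gamma2 :: "nat \<Rightarrow> (nat \<Rightarrow> complex) \<Rightarrow> complex" where
  "gamma2 n a = (\<Sum>j=1..n. coef_d n a j * cnj (coef_b n a j))"
definition gamma3 :: "nat \<Rightarrow> (nat \<Rightarrow> complex) \<Rightarrow> complex" where
  "gamma3 n a = (\<Sum>j=1..n. coef_d n a j * cnj (a j))"
definition gamma4 :: "nat \<Rightarrow> (nat \<Rightarrow> complex) \<Rightarrow> complex" where
  "gamma4 n a = (\<Sum>j=1..n. coef_c n a j * cnj (coef_b n a j))"
definition gamma5 :: "nat \<Rightarrow> (nat \<Rightarrow> complex) \<Rightarrow> complex" where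
  "gamma5 n a = (\<Sum>j=1..n. coef_c n a j * cnj (a j))"

definition delta2 :: "nat \<Rightarrow> (nat \<Rightarrow> complex) \<Rightarrow> real" where
  "delta2 n a = (let g2 = (cmod (gamma2 n a))\<^sup>2; g3 = (cmod (gamma3 n a))\<^sup>2;
                     g4 = (cmod (gamma4 n a))\<^sup>2; g5 = (cmod (gamma5 n a))\<^sup>2 in
     (g2 + g3 + g4 + g5 + sqrt (((g2 + g3) - (g4 + g5))\<^sup>2
        + 4 * (cmod (gamma2 n a * cnj (gamma4 n a) + gamma3 n a * cnj (gamma5 n a)))\<^sup>2)) / 2)"

end

theory Submission imports Defs "HOL-Analysis.L2_Norm"
begin

lemma real_quad:
  fixes a b c u v :: real
  assumes c: "c \<ge> 0"
  shows "a*u^2 + b*v^2 + 2*c*u*v \<le> (a+b+sqrt((a-b)^2+4*c^2))/2 * (u^2+v^2)"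
proof -
  define R where "R = sqrt((a-b)^2+4*c^2)"
  have R0: "R \<ge> 0" unfolding R_def by simp
  have R2: "R^2 = (a-b)^2+4*c^2" unfolding R_def by simp
  have Rge: "R \<ge> \<bar>a-b\<bar>" unfolding R_def by (rule real_le_rsqrt) (simp add: power2_abs)
  define L where "L = (a+b+R)/2"
  have Rge2: "a - b \<le> R" "b - a \<le> R" using Rge by (auto simp: abs_le_iff)
  have La: "L - a \<ge> 0" using Rge2 unfolding L_def by (simp add: field_simps)
  have Lb: "L - b \<ge> 0" using Rge2 unfolding L_def by (simp add: field_simps)
  have "(L-a)*(L-b) = (R^2 - (a-b)^2)/4" unfolding L_def by (simp add: field_simps power2_eq_square)
  then have prod: "(L-a)*(L-b) = c^2" using R2 by simp
  have "L*(u^2+v^2) - (a*u^2 + b*v^2 + 2*c*u*v) \<ge> 0"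
  proof (cases "L - a = 0")
    case True
    then have "c = 0" using prod by simp
    then show ?thesis using True Lb by (simp add: algebra_simps mult_right_mono)
  next
    case False
    then have pos: "L - a > 0" using La by simp
    have "(L-a) * (L*(u^2+v^2) - (a*u^2 + b*v^2 + 2*c*u*v)) = ((L-a)*u - c*v)^2 + ((L-a)*(L-b) - c^2)*v^2"
      by (simp add: algebra_simps power2_eq_square)
    then have "(L-a) * (L*(u^2+v^2) - (a*u^2 + b*v^2 + 2*c*u*v)) = ((L-a)*u - c*v)^2"
      using prod by simp
    then have "(L-a) * (L*(u^2+v^2) - (a*u^2 + b*v^2 + 2*c*u*v)) \<ge> 0" by simp
    then show ?thesis using pos by (simp add: zero_le_mult_iff)
  qed
  then show ?thesis unfolding L_def R_def by simp
qed

lemma herm2: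
  fixes a b :: real and g z0 z1 :: complex
  shows "a*(cmod z0)^2 + b*(cmod z1)^2 + 2*Re(g*z0*cnj z1)
     \<le> (a+b+sqrt((a-b)^2+4*(cmod g)^2))/2 * ((cmod z0)^2+(cmod z1)^2)"
proof -
  have "Re(g*z0*cnj z1) \<le> cmod (g*z0*cnj z1)" by (rule complex_Re_le_cmod)
  also have "\<dots> = cmod g * cmod z0 * cmod z1" by (simp add: norm_mult)
  finally have "a*(cmod z0)^2 + b*(cmod z1)^2 + 2*Re(g*z0*cnj z1)
     \<le> a*(cmod z0)^2 + b*(cmod z1)^2 + 2*cmod g*cmod z0*cmod z1" by simp
  also have "\<dots> \<le> (a+b+sqrt((a-b)^2+4*(cmod g)^2))/2 * ((cmod z0)^2+(cmod z1)^2)" by (rule real_quad) simp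
  finally show ?thesis .
qed

lemma cmod_sum2_sq:
  fixes y0 y1 r0 r1 :: complex
  shows "(cmod (y0*r0 + y1*r1))^2 = (cmod y0)^2*(cmod r0)^2 + (cmod y1)^2*(cmod r1)^2
     + 2*Re(y0*cnj y1*(r0*cnj r1))"
  unfolding cmod_power2 by (simp add: power2_eq_square algebra_simps)

lemma qf2:
  fixes y0 y1 :: complex and r0 r1 :: "'j \<Rightarrow> complex"
  shows "(\<Sum>j\<in>J. (cmod (y0*r0 j + y1*r1 j))^2) = (cmod y0)^2 * (\<Sum>j\<in>J. (cmod (r0 j))^2)
     + (cmod y1)^2 * (\<Sum>j\<in>J. (cmod (r1 j))^2) + 2*Re(y0*cnj y1*(\<Sum>j\<in>J. r0 j * cnj (r1 j)))"
  by (simp add: cmod_sum2_sq sum.distrib sum_distrib_left Re_sum)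

lemma cs2:
  fixes a b c d :: complex
  shows "cmod (a*b + c*d) \<le> sqrt ((cmod a)^2 + (cmod c)^2) * sqrt ((cmod b)^2 + (cmod d)^2)"
proof -
  have "cmod (a*b + c*d) \<le> cmod a * cmod b + cmod c * cmod d"
    by (metis norm_mult norm_triangle_ineq)
  also have "\<dots> \<le> sqrt ((cmod a)^2 + (cmod c)^2) * sqrt ((cmod b)^2 + (cmod d)^2)"
  proof -
    have "(cmod a * cmod b + cmod c * cmod d)^2 \<le> ((cmod a)^2 + (cmod c)^2) * ((cmod b)^2 + (cmod d)^2)"
    proof -
      have "(cmod a * cmod b + cmod c * cmod d)^2 = ((cmod a)^2 + (cmod c)^2) * ((cmod b)^2 + (cmod d)^2)
         - (cmod a * cmod d - cmod c * cmod b)^2" by (simp add: power2_eq_square algebra_simps)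
      moreover have "0 \<le> (cmod a * cmod d - cmod c * cmod b)^2" by simp
      ultimately show ?thesis by linarith
    qed
    then have "cmod a * cmod b + cmod c * cmod d \<le> sqrt (((cmod a)^2 + (cmod c)^2) * ((cmod b)^2 + (cmod d)^2))"
      by (rule real_le_rsqrt)
    then show ?thesis by (simp add: real_sqrt_mult)
  qed
  finally show ?thesis .
qed

lemma cs_sum:
  fixes x w :: "'j \<Rightarrow> complex"
  shows "cmod (\<Sum>j\<in>J. x j * w j) \<le> sqrt (\<Sum>j\<in>J. (cmod (x j))^2) * sqrt (\<Sum>j\<in>J. (cmod (w j))^2)"
proof -
  have "cmod (\<Sum>j\<in>J. x j * w j) \<le> (\<Sum>j\<in>J. cmod (x j * w j))" by (rule norm_sum)
  also have "\<dots> = (\<Sum>j\<in>J. \<bar>cmod (x j)\<bar> * \<bar>cmod (w j)\<bar>)" by (simp add: norm_mult)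
  also have "\<dots> \<le> L2_set (\<lambda>j. cmod (x j)) J * L2_set (\<lambda>j. cmod (w j)) J" by (rule L2_set_mult_ineq)
  finally show ?thesis unfolding L2_set_def .
qed

definition lmax :: "real \<Rightarrow> real \<Rightarrow> real \<Rightarrow> real" where
  "lmax a b c2 = (a + b + sqrt ((a-b)^2 + 4*c2))/2"

lemma lmax_nonneg: "a \<ge> 0 \<Longrightarrow> b \<ge> 0 \<Longrightarrow> c2 \<ge> 0 \<Longrightarrow> lmax a b c2 \<ge> 0"
  unfolding lmax_def by simp

lemma herm2': "a*(cmod z0)^2 + b*(cmod z1)^2 + 2*Re(g*z0*cnj z1) \<le> lmax a b ((cmod g)^2) * ((cmod z0)^2+(cmod z1)^2)"
  unfolding lmax_def by (rule herm2)

lemma rows4: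
  fixes r0 r1 r2 r3 x :: "'j \<Rightarrow> complex" and J :: "'j set"
  defines "p0 \<equiv> (\<Sum>j\<in>J. r0 j * x j)" and "p1 \<equiv> (\<Sum>j\<in>J. r1 j * x j)"
      and "p2 \<equiv> (\<Sum>j\<in>J. r2 j * x j)" and "p3 \<equiv> (\<Sum>j\<in>J. r3 j * x j)"
  defines "A0 \<equiv> (\<Sum>j\<in>J. (cmod (r0 j))^2)" and "A1 \<equiv> (\<Sum>j\<in>J. (cmod (r1 j))^2)"
      and "A2 \<equiv> (\<Sum>j\<in>J. (cmod (r2 j))^2)" and "A3 \<equiv> (\<Sum>j\<in>J. (cmod (r3 j))^2)"
  defines "G01 \<equiv> (\<Sum>j\<in>J. r0 j * cnj (r1 j))" and "G23 \<equiv> (\<Sum>j\<in>J. r2 j * cnj (r3 j))"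
      and "G02 \<equiv> (\<Sum>j\<in>J. r0 j * cnj (r2 j))" and "G03 \<equiv> (\<Sum>j\<in>J. r0 j * cnj (r3 j))"
      and "G12 \<equiv> (\<Sum>j\<in>J. r1 j * cnj (r2 j))" and "G13 \<equiv> (\<Sum>j\<in>J. r1 j * cnj (r3 j))"
  defines "d1 \<equiv> lmax A0 A1 ((cmod G01)^2)" and "d \<equiv> lmax A2 A3 ((cmod G23)^2)"
      and "d2 \<equiv> lmax ((cmod G02)^2 + (cmod G03)^2) ((cmod G12)^2 + (cmod G13)^2)
                  ((cmod (G02 * cnj G12 + G03 * cnj G13))^2)"
  shows "(cmod p0)^2 + (cmod p1)^2 + (cmod p2)^2 + (cmod p3)^2
          \<le> lmax d1 d d2 * (\<Sum>j\<in>J. (cmod (x j))^2)"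
proof -
  define y0 where "y0 = cnj p0"
  define y1 where "y1 = cnj p1"
  define y2 where "y2 = cnj p2"
  define y3 where "y3 = cnj p3"
  define u where "u j = y0 * r0 j + y1 * r1 j" for j
  define v where "v j = y2 * r2 j + y3 * r3 j" for j
  define w where "w j = u j + v j" for j
  define S where "S = (cmod p0)^2 + (cmod p1)^2 + (cmod p2)^2 + (cmod p3)^2"
  define X where "X = (\<Sum>j\<in>J. (cmod (x j))^2)"
  define W where "W = (\<Sum>j\<in>J. (cmod (w j))^2)"
  define s01 where "s01 = (cmod y0)^2 + (cmod y1)^2"
  define s23 where "s23 = (cmod y2)^2 + (cmod y3)^2"
  have s010: "s01 \<ge> 0" and s230: "s23 \<ge> 0" unfolding s01_def s23_def by simp_all
  have S0: "S \<ge> 0" unfolding S_def by simp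
  have X0: "X \<ge> 0" unfolding X_def by (simp add: sum_nonneg)
  have Ss: "S = s01 + s23" unfolding S_def s01_def s23_def y0_def y1_def y2_def y3_def by simp
  have d10: "d1 \<ge> 0" unfolding d1_def A0_def A1_def by (rule lmax_nonneg) (simp_all add: sum_nonneg)
  have dd0: "d \<ge> 0" unfolding d_def A2_def A3_def by (rule lmax_nonneg) (simp_all add: sum_nonneg)
  have d20: "d2 \<ge> 0" unfolding d2_def by (rule lmax_nonneg) simp_all
  have L0: "lmax d1 d d2 \<ge> 0" using d10 dd0 d20 by (rule lmax_nonneg)
  have "(\<Sum>j\<in>J. x j * w j) = y0*p0 + y1*p1 + y2*p2 + y3*p3"
    unfolding w_def u_def v_def p0_def p1_def p2_def p3_def
    by (simp add: algebra_simps sum.distrib sum_distrib_left)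
  also have "\<dots> = complex_of_real S"
  proof -
    have "complex_of_real S = p0*cnj p0 + p1*cnj p1 + p2*cnj p2 + p3*cnj p3"
      unfolding S_def by (simp only: of_real_add complex_norm_square)
    then show ?thesis unfolding y0_def y1_def y2_def y3_def by (simp add: mult.commute)
  qed
  finally have xw: "(\<Sum>j\<in>J. x j * w j) = complex_of_real S" .
  have SW: "S \<le> sqrt X * sqrt W"
    using cs_sum[of x w J] S0 unfolding xw X_def W_def by simp
  have Wexp: "W = (\<Sum>j\<in>J. (cmod (u j))^2) + (\<Sum>j\<in>J. (cmod (v j))^2) + 2*Re(\<Sum>j\<in>J. u j * cnj (v j))"
    using qf2[of 1 u 1 v J] unfolding W_def w_def by simp
  have Uq: "(\<Sum>j\<in>J. (cmod (u j))^2) \<le> d1 * s01"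
    using qf2[of y0 r0 y1 r1 J] herm2'[of A0 y0 A1 y1 G01]
    unfolding u_def A0_def A1_def G01_def d1_def s01_def
    by (simp add: algebra_simps)
  have Vq: "(\<Sum>j\<in>J. (cmod (v j))^2) \<le> d * s23"
    using qf2[of y2 r2 y3 r3 J] herm2'[of A2 y2 A3 y3 G23]
    unfolding v_def A2_def A3_def G23_def d_def s23_def
    by (simp add: algebra_simps)
  define n0 where "n0 = y0 * G02 + y1 * G12"
  define n1 where "n1 = y0 * G03 + y1 * G13"
  have cross: "(\<Sum>j\<in>J. u j * cnj (v j)) = cnj y2 * n0 + cnj y3 * n1"
    unfolding u_def v_def n0_def n1_def G02_def G12_def G03_def G13_def
    by (simp add: algebra_simps sum.distrib sum_distrib_left)
  have nn: "(cmod n0)^2 + (cmod n1)^2 \<le> d2 * s01"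
  proof -
    have "(cmod n0)^2 + (cmod n1)^2 = ((cmod G02)^2 + (cmod G03)^2) * (cmod y0)^2
        + ((cmod G12)^2 + (cmod G13)^2) * (cmod y1)^2
        + 2*Re((G02 * cnj G12 + G03 * cnj G13) * y0 * cnj y1)"
      unfolding n0_def n1_def cmod_sum2_sq by (simp add: algebra_simps)
    also have "\<dots> \<le> d2 * s01" unfolding d2_def s01_def by (rule herm2')
    finally show ?thesis .
  qed
  have "Re(\<Sum>j\<in>J. u j * cnj (v j)) \<le> cmod (cnj y2 * n0 + cnj y3 * n1)"
    unfolding cross by (rule complex_Re_le_cmod)
  also have "\<dots> \<le> sqrt s23 * sqrt ((cmod n0)^2 + (cmod n1)^2)"
    using cs2[of "cnj y2" n0 "cnj y3" n1] unfolding s23_def by simp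
  also have "\<dots> \<le> sqrt s23 * (sqrt d2 * sqrt s01)"
    using nn s230 by (intro mult_left_mono) (simp_all add: real_sqrt_mult[symmetric])
  finally have Cr: "Re(\<Sum>j\<in>J. u j * cnj (v j)) \<le> sqrt s23 * (sqrt d2 * sqrt s01)" .
  have "W \<le> d1 * s01 + d * s23 + 2 * (sqrt s23 * (sqrt d2 * sqrt s01))"
    using Wexp Uq Vq Cr by linarith
  also have "\<dots> = d1 * (sqrt s01)^2 + d * (sqrt s23)^2 + 2 * sqrt d2 * sqrt s01 * sqrt s23"
    using s010 s230 by (simp add: algebra_simps)
  also have "\<dots> \<le> lmax d1 d d2 * ((sqrt s01)^2 + (sqrt s23)^2)"
    using real_quad[of "sqrt d2" d1 "sqrt s01" d "sqrt s23"] d20 unfolding lmax_def by simp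
  also have "\<dots> = lmax d1 d d2 * S" using s010 s230 Ss by simp
  finally have WL: "W \<le> lmax d1 d d2 * S" .
  have W0: "W \<ge> 0" unfolding W_def by (simp add: sum_nonneg)
  have "S^2 \<le> (sqrt X * sqrt W)^2" using SW S0 by (simp add: power_mono)
  also have "\<dots> = X * W" using X0 W0 by (simp add: power_mult_distrib)
  also have "\<dots> \<le> X * (lmax d1 d d2 * S)" using WL X0 by (simp add: mult_left_mono)
  finally have SS: "S * S \<le> (lmax d1 d d2 * X) * S" by (simp add: power2_eq_square algebra_simps)
  have "S \<le> lmax d1 d d2 * X"
  proof (cases "S = 0")
    case True then show ?thesis using L0 X0 by simp
  next
    case False then have "S > 0" using S0 by simp
    then show ?thesis using SS by simp
  qed
  then show ?thesis unfolding S_def X_def .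
qed

lemma lmax_comm: "lmax a b c = lmax b a c"
  unfolding lmax_def by (simp add: power2_commute add.commute)

lemma rev_sum: "(\<Sum>j=1..n. f (n - j)) = (\<Sum>j<n. (f::nat\<Rightarrow>'a::comm_monoid_add) j)"
  apply (rule sum.reindex_bij_witness[of _ "\<lambda>j. n - j" "\<lambda>j. n - j"])
  apply auto
  done

lemma companion_carrier: "companion n a \<in> carrier_mat n n"
  unfolding companion_def by simp

lemma companion_index: "i < n \<Longrightarrow> j < n \<Longrightarrow> companion n a $$ (i,j) =
   (if i = 0 then - a (n - j) else if i = j + 1 then 1 else 0)"
  unfolding companion_def by simp

lemma pow_mat_Suc_left:
  assumes A: "A \<in> carrier_mat n n"
  shows "A ^\<^sub>m Suc k = A * A ^\<^sub>m k"
proof (induction k)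
  case 0
  show ?case using A by simp
next
  case (Suc k)
  have "A ^\<^sub>m Suc (Suc k) = (A * A ^\<^sub>m k) * A" using Suc by simp
  also have "\<dots> = A * (A ^\<^sub>m k * A)"
    using A by (intro assoc_mult_mat[of _ n n _ n _ n]) auto
  finally show ?case by simp
qed

lemma pow_mat_one': "A \<in> carrier_mat n n \<Longrightarrow> A ^\<^sub>m 1 = A"
  by simp

lemma companion_mult_vec:
  assumes w: "w \<in> carrier_vec n" and i: "i < n"
  shows "(companion n a *\<^sub>v w) $ i =
     (if i = 0 then (\<Sum>j<n. companion n a $$ (0,j) * w $ j) else w $ (i - 1))"
proof -
  have "(companion n a *\<^sub>v w) $ i = (\<Sum>j\<in>{0..<n}. companion n a $$ (i,j) * w $ j)"
    using w i companion_carrier[of n a] by (simp add: scalar_prod_def)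
  also have "\<dots> = (\<Sum>j<n. companion n a $$ (i,j) * w $ j)"
    by (simp add: atLeast0LessThan)
  finally have eq: "(companion n a *\<^sub>v w) $ i = (\<Sum>j<n. companion n a $$ (i,j) * w $ j)" .
  show ?thesis
  proof (cases "i = 0")
    case True then show ?thesis using eq by simp
  next
    case False
    then obtain i' where i': "i = Suc i'" by (cases i) auto
    have "(\<Sum>j<n. companion n a $$ (i,j) * w $ j) = (\<Sum>j<n. if j = i' then w $ j else 0)"
      using i i' by (intro sum.cong) (auto simp: companion_index)
    also have "\<dots> = w $ i'" using i i' by simp
    finally show ?thesis using eq i' by simp
  qed
qed

lemma step_norm:
  assumes w: "w \<in> carrier_vec n" and n: "n \<ge> 1"
  shows "(\<Sum>i<n. (cmod ((companion n a *\<^sub>v w) $ i))^2)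
     \<le> (cmod ((companion n a *\<^sub>v w) $ 0))^2 + (\<Sum>i<n. (cmod (w $ i))^2)"
proof -
  obtain m where m: "n = Suc m" using n by (cases n) auto
  have "(\<Sum>i<n. (cmod ((companion n a *\<^sub>v w) $ i))^2)
     = (cmod ((companion n a *\<^sub>v w) $ 0))^2 + (\<Sum>i<m. (cmod ((companion n a *\<^sub>v w) $ Suc i))^2)"
    unfolding m by (rule sum.lessThan_Suc_shift)
  also have "(\<Sum>i<m. (cmod ((companion n a *\<^sub>v w) $ Suc i))^2) = (\<Sum>i<m. (cmod (w $ i))^2)"
    using w m by (intro sum.cong) (auto simp: companion_mult_vec)
  also have "\<dots> \<le> (\<Sum>i<n. (cmod (w $ i))^2)"
    unfolding m by (simp add: sum.lessThan_Suc)
  finally show ?thesis by simp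
qed

lemma main_bound:
  fixes n :: nat and a :: "nat \<Rightarrow> complex"
  assumes n: "n \<ge> 1" and v: "v \<in> carrier_vec n"
  shows "(\<Sum>i<n. (cmod ((companion n a ^\<^sub>m 4 *\<^sub>v v) $ i))^2)
     \<le> lmax (delta1 n a) (delta n a) (delta2 n a) * (\<Sum>j<n. (cmod (v $ j))^2) + (\<Sum>j<n. (cmod (v $ j))^2)"
proof -
  let ?C = "companion n a"
  have Cc: "?C \<in> carrier_mat n n" by (rule companion_carrier)
  define V where "V k = ?C ^\<^sub>m k *\<^sub>v v" for k
  have Vc: "V k \<in> carrier_vec n" for k unfolding V_def using Cc v by (meson mult_mat_vec_carrier pow_carrier_mat)
  have VS: "V (Suc k) = ?C *\<^sub>v V k" for k
    unfolding V_def pow_mat_Suc_left[OF Cc]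
    by (rule assoc_mult_mat_vec[of _ n n _ n]) (use Cc v in auto)
  have V0: "V k $ 0 = (\<Sum>j<n. (?C ^\<^sub>m k) $$ (0,j) * v $ j)" for k
    unfolding V_def using Cc v n by (simp add: scalar_prod_def atLeast0LessThan)
  define N where "N k = (\<Sum>i<n. (cmod (V k $ i))^2)" for k
  have NS: "N (Suc k) \<le> (cmod (V (Suc k) $ 0))^2 + N k" for k
    unfolding N_def VS using step_norm[OF Vc n] .
  have N0: "N 0 = (\<Sum>j<n. (cmod (v $ j))^2)"
    unfolding N_def V_def using Cc v by simp
  have "N 4 \<le> (cmod (V 4 $ 0))^2 + (cmod (V 3 $ 0))^2 + (cmod (V 2 $ 0))^2 + (cmod (V 1 $ 0))^2 + N 0"
    using NS[of 3] NS[of 2] NS[of 1] NS[of 0] by (simp add: numeral_eq_Suc)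
  also have "(cmod (V 4 $ 0))^2 + (cmod (V 3 $ 0))^2 + (cmod (V 2 $ 0))^2 + (cmod (V 1 $ 0))^2
      \<le> lmax (delta1 n a) (delta n a) (delta2 n a) * (\<Sum>j<n. (cmod (v $ j))^2)"
  proof -
    define r0 where "r0 j = (?C ^\<^sub>m 4) $$ (0,j)" for j
    define r1 where "r1 j = (?C ^\<^sub>m 3) $$ (0,j)" for j
    define r2 where "r2 j = (?C ^\<^sub>m 2) $$ (0,j)" for j
    define r3 where "r3 j = ?C $$ (0,j)" for j
    have C1: "?C ^\<^sub>m 1 = ?C" using Cc by simp
    have a_eq: "a j = - r3 (n - j)" if "j \<in> {1..n}" for j
      using that n unfolding r3_def by (simp add: companion_index)
    have e1: "alpha1 n a = (\<Sum>j<n. (cmod (r0 j))^2)"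
      unfolding alpha1_def coef_d_def frow_def r0_def by (rule rev_sum)
    have e2: "beta1 n a = (\<Sum>j<n. (cmod (r1 j))^2)"
      unfolding beta1_def coef_c_def frow_def r1_def by (rule rev_sum)
    have e3: "gamma1 n a = (\<Sum>j<n. r0 j * cnj (r1 j))"
      unfolding gamma1_def coef_c_def coef_d_def frow_def r0_def r1_def by (rule rev_sum)
    have e4: "beta n a = (\<Sum>j<n. (cmod (r2 j))^2)"
      unfolding beta_def coef_b_def frow_def r2_def by (rule rev_sum)
    have e5: "alpha n a = (\<Sum>j<n. (cmod (r3 j))^2)"
    proof -
      have "alpha n a = (\<Sum>j=1..n. (cmod (r3 (n - j)))^2)"
        unfolding alpha_def by (intro sum.cong) (simp_all add: a_eq)
      then show ?thesis using rev_sum[of "\<lambda>k. (cmod (r3 k))^2" n] by simp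
    qed
    have e6: "gamma n a = (\<Sum>j<n. r2 j * cnj (r3 j))"
    proof -
      have "(\<Sum>j=1..n. coef_b n a j * cnj (a j)) = (\<Sum>j=1..n. - (r2 (n - j) * cnj (r3 (n - j))))"
        unfolding coef_b_def frow_def r2_def by (intro sum.cong) (simp_all add: a_eq)
      then have "gamma n a = (\<Sum>j=1..n. r2 (n - j) * cnj (r3 (n - j)))"
        unfolding gamma_def by (simp add: sum_negf)
      then show ?thesis using rev_sum[of "\<lambda>k. r2 k * cnj (r3 k)" n] by simp
    qed
    have e7: "gamma2 n a = (\<Sum>j<n. r0 j * cnj (r2 j))"
      unfolding gamma2_def coef_b_def coef_d_def frow_def r0_def r2_def by (rule rev_sum)
    have e8: "gamma4 n a = (\<Sum>j<n. r1 j * cnj (r2 j))"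
      unfolding gamma4_def coef_b_def coef_c_def frow_def r1_def r2_def by (rule rev_sum)
    have e9: "gamma3 n a = - (\<Sum>j<n. r0 j * cnj (r3 j))"
    proof -
      have "gamma3 n a = (\<Sum>j=1..n. - (r0 (n - j) * cnj (r3 (n - j))))"
        unfolding gamma3_def coef_d_def frow_def r0_def
        by (intro sum.cong) (simp_all add: a_eq)
      then show ?thesis using rev_sum[of "\<lambda>k. - (r0 k * cnj (r3 k))" n] by (simp add: sum_negf)
    qed
    have e10: "gamma5 n a = - (\<Sum>j<n. r1 j * cnj (r3 j))"
    proof -
      have "gamma5 n a = (\<Sum>j=1..n. - (r1 (n - j) * cnj (r3 (n - j))))"
        unfolding gamma5_def coef_c_def frow_def r1_def
        by (intro sum.cong) (simp_all add: a_eq)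
      then show ?thesis using rev_sum[of "\<lambda>k. - (r1 k * cnj (r3 k))" n] by (simp add: sum_negf)
    qed
    have D1: "delta1 n a = lmax (\<Sum>j<n. (cmod (r0 j))^2) (\<Sum>j<n. (cmod (r1 j))^2) ((cmod (\<Sum>j<n. r0 j * cnj (r1 j)))^2)"
      unfolding delta1_def lmax_def e1 e2 e3 ..
    have D: "delta n a = lmax (\<Sum>j<n. (cmod (r2 j))^2) (\<Sum>j<n. (cmod (r3 j))^2) ((cmod (\<Sum>j<n. r2 j * cnj (r3 j)))^2)"
      unfolding lmax_comm[of "\<Sum>j<n. (cmod (r2 j))^2"] unfolding delta_def lmax_def e4 e5 e6 ..
    have D2: "delta2 n a = lmax ((cmod (\<Sum>j<n. r0 j * cnj (r2 j)))^2 + (cmod (\<Sum>j<n. r0 j * cnj (r3 j)))^2)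
        ((cmod (\<Sum>j<n. r1 j * cnj (r2 j)))^2 + (cmod (\<Sum>j<n. r1 j * cnj (r3 j)))^2)
        ((cmod ((\<Sum>j<n. r0 j * cnj (r2 j)) * cnj (\<Sum>j<n. r1 j * cnj (r2 j))
              + (\<Sum>j<n. r0 j * cnj (r3 j)) * cnj (\<Sum>j<n. r1 j * cnj (r3 j))))^2)"
      unfolding delta2_def lmax_def Let_def e7 e8 e9 e10 by (simp add: add.assoc)
    have p: "V k $ 0 = (\<Sum>j<n. (?C ^\<^sub>m k) $$ (0,j) * v $ j)" for k by (rule V0)
    show ?thesis
      using rows4[of r0 "\<lambda>j. v $ j" "{..<n}" r1 r2 r3]
      unfolding D1 D D2 V0 r0_def r1_def r2_def r3_def C1 .
  qed
  finally have fin: "N 4 \<le> lmax (delta1 n a) (delta n a) (delta2 n a) * (\<Sum>j<n. (cmod (v $ j))^2) + N 0" by simp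
  have fin2: "N 4 \<le> lmax (delta1 n a) (delta n a) (delta2 n a) * (\<Sum>j<n. (cmod (v $ j))^2) + (\<Sum>j<n. (cmod (v $ j))^2)"
    using fin unfolding N0 .
  show ?thesis using fin2 unfolding N_def V_def .
qed

theorem mainTheorem11:
  fixes n :: nat and a :: "nat \<Rightarrow> complex"
  assumes "n \<ge> 2" and "a 1 \<noteq> 0"
  shows "spectral_norm (companion n a ^\<^sub>m 4)
           \<le> sqrt ((delta1 n a + delta n a
                     + sqrt ((delta1 n a - delta n a)\<^sup>2 + 4 * delta2 n a)) / 2 + 1)"
proof -
  let ?C = "companion n a"
  let ?L = "lmax (delta1 n a) (delta n a) (delta2 n a)"
  have n1: "n \<ge> 1" using assms(1) by simp
  have Cc: "?C \<in> carrier_mat n n" by (rule companion_carrier)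
  have dc: "dim_col (?C ^\<^sub>m 4) = n" using Cc by simp
  have d1: "delta1 n a \<ge> 0" unfolding delta1_def alpha1_def beta1_def
    by (intro divide_nonneg_pos add_nonneg_nonneg sum_nonneg) auto
  have d0: "delta n a \<ge> 0" unfolding delta_def alpha_def beta_def
    by (intro divide_nonneg_pos add_nonneg_nonneg sum_nonneg) auto
  have d2: "delta2 n a \<ge> 0" unfolding delta2_def Let_def
    by (intro divide_nonneg_pos add_nonneg_nonneg) auto
  have L0: "?L \<ge> 0" using d1 d0 d2 by (rule lmax_nonneg)
  have bound: "x \<le> sqrt (?L + 1)"
    if mem: "x \<in> {vec_norm2 (?C ^\<^sub>m 4 *\<^sub>v v) | v. v \<in> carrier_vec (dim_col (?C ^\<^sub>m 4)) \<and> vec_norm2 v \<le> 1}" for x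
  proof -
    from mem obtain v where x: "x = vec_norm2 (?C ^\<^sub>m 4 *\<^sub>v v)" and v': "v \<in> carrier_vec (dim_col (?C ^\<^sub>m 4))" and vn: "vec_norm2 v \<le> 1"
      by (elim CollectE exE conjE)
    have v: "v \<in> carrier_vec n" using v' unfolding dc .
    have dv: "dim_vec v = n" using v by simp
    define X where "X = (\<Sum>j<n. (cmod (v $ j))^2)"
    have "sqrt X \<le> 1" using vn unfolding vec_norm2_def dv X_def .
    then have X1: "X \<le> 1" by simp
    have X0: "X \<ge> 0" unfolding X_def by (simp add: sum_nonneg)
    have dw: "dim_vec (?C ^\<^sub>m 4 *\<^sub>v v) = n" using Cc by simp
    have "(\<Sum>i<n. (cmod ((?C ^\<^sub>m 4 *\<^sub>v v) $ i))^2) \<le> ?L * X + X"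
      unfolding X_def by (rule main_bound[OF n1 v])
    also have "\<dots> \<le> ?L + 1" using X1 X0 L0 by (simp add: add_mono mult_left_le)
    finally have "(\<Sum>i<n. (cmod ((?C ^\<^sub>m 4 *\<^sub>v v) $ i))^2) \<le> ?L + 1" .
    then show ?thesis unfolding x vec_norm2_def dw by (rule real_sqrt_le_mono)
  qed
  have ne: "{vec_norm2 (?C ^\<^sub>m 4 *\<^sub>v v) | v. v \<in> carrier_vec (dim_col (?C ^\<^sub>m 4)) \<and> vec_norm2 v \<le> 1} \<noteq> {}"
  proof -
    have "vec_norm2 (0\<^sub>v n :: complex vec) \<le> 1" unfolding vec_norm2_def by simp
    moreover have "(0\<^sub>v n :: complex vec) \<in> carrier_vec (dim_col (?C ^\<^sub>m 4))" unfolding dc by simp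
    ultimately have "vec_norm2 (?C ^\<^sub>m 4 *\<^sub>v 0\<^sub>v n) \<in> {vec_norm2 (?C ^\<^sub>m 4 *\<^sub>v v) | v. v \<in> carrier_vec (dim_col (?C ^\<^sub>m 4)) \<and> vec_norm2 v \<le> 1}"
      by (intro CollectI exI[of _ "0\<^sub>v n"]) simp
    then show ?thesis by (metis empty_iff)
  qed
  have "spectral_norm (?C ^\<^sub>m 4) \<le> sqrt (?L + 1)"
    unfolding spectral_norm_def by (rule cSup_least[OF ne bound]) 
  then show ?thesis unfolding lmax_def .
qed

end
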